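(* Let $(M,f,g)$ be an $(m,n)$-hypermodule over a commutative Krasner $(m,n)$-hyperring $(R,f',g')$ with scalar identity $1$, let $N\subseteq Q$ be proper subhypermodules of $M$, and let $\phi:\mathcal{SH}(M)\to\mathcal{SH}(M)\cup\{\varnothing\}$ be a function. If $Q$ is an $n$-ary $\phi$-classical prime subhypermodule of $M$, then $Q/N$ is an $n$-ary $\phi_N$-classical prime subhypermodule of $M/N$.
   Context: A commutative Krasner $(m,n)$-hyperring with scalar identity $1$ is a triple $(R,f',g')$ where $(R,f')$ is a canonical $m$-ary hypergroup with zero $0$, $(R,g')$ is a commutative $n$-ary semigroup, $g'$ is distributive over $f'$, $0$ is a zero element for $g'$, and $g'(x,1^{(n-1)})=x$. Notation: $x_i^j$ denotes $x_i,\dots,x_j$ and $x^{(k)}$ denotes $x$ repeated $k$ times. An $(m,n)$-hypermodule over $R$ is a triple $(M,f,g)$ with $(M,f)$ a canonical $m$-ary hypergroup with zero $0$ and $g:R^{n-1}\times M\to P^*(M)$ satisfying: $g(r_1^{n-1},f(x_1^m))=f(g(r_1^{n-1},x_1),\dots,g(r_1^{n-1},x_m))$; $g(r_1^{i-1},f'(s_1^m),r_{i+1}^{n-1},x)=f(g(r_1^{i-1},s_1,r_{i+1}^{n-1},x),\dots,g(r_1^{i-1},s_m,r_{i+1}^{n-1},x))$; $g(r_1^{i-1},g'(r_i^{i+n-1}),r_{i+n}^{2n-2},x)=g(r_1^{n-1},g(r_n^{2n-2},x))$; $g(r_1^{i-1},0,r_{i+1}^{n-1},x)=\{0\}$; moreover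 $g(1^{(n-1)},a)=\{a\}$. Operations on subsets are unions over elements. A subhypermodule is a nonempty $N\subseteq M$ with $(N,f)$ an $m$-ary subhypergroup and $g(R^{(n-1)},N)\subseteq N$; $\mathcal{SH}(M)$ denotes the set of subhypermodules of $M$. Given $\phi:\mathcal{SH}(M)\to\mathcal{SH}(M)\cup\{\varnothing\}$, a proper subhypermodule $Q$ is $n$-ary $\phi$-classical prime if for $r_1^{n-1}\in R$, $a\in M$, $g(r_1^{n-1},a)\subseteq Q\setminus\phi(Q)$ implies $g(r_i,1^{(n-2)},a)\subseteq Q$ for some $1\le i\le n-1$ (the same definition applies to any $(m,n)$-hypermodule and function on its subhypermodules). The quotient $M/N=\{f(a,N,0^{(m-2)}):a\in M\}$ is an $(m,n)$-hypermodule with $F(f(a_1,N,0^{(m-2)}),\dots,f(a_m,N,0^{(m-2)}))=\{f(t,N,0^{(m-2)}):t\in f(a_1^m)\}$ and $G(r_1^{n-1},f(a,N,0^{(m-2)}))=\{f(z,N,0^{(m-2)}):z\in g(r_1^{n-1},a)\}$; for a subhypermodule $K\supseteq N$, $K/N=\{f(a,N,0^{(m-2)}):a\in K\}$, and every subhypermodule of $M/N$ has this form. Define $\phi_N:\mathcal{SH}(M/N)\to\mathcal{SH}(M/N)\cup\{\varnothing\}$ by $\phi_N(K/N)=f(\phi(K),N,0^{(m-2)})/N$ for subhypermodules $K\supseteq N$, and $\phi_N(K/N)=\varnothing$ if $\phi(K)=\varnothing$. *)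

theory Defs
  imports Main "HOL-Library.Multiset"
begin

text \<open>An m-ary hyperoperation on a carrier is modelled as a function from lists
(of length m) to sets. Operations on subsets are unions over elements.\<close>

definition lift :: "('a list \<Rightarrow> 'b set) \<Rightarrow> 'a set list \<Rightarrow> 'b set" where
  "lift f Xs = \<Union>{f ys | ys. list_all2 (\<lambda>y X. y \<in> X) ys Xs}"

definition sing :: "'a list \<Rightarrow> 'a set list" where
  "sing xs = map (\<lambda>x. {x}) xs"

definition hinv :: "nat \<Rightarrow> 'a set \<Rightarrow> ('a list \<Rightarrow> 'a set) \<Rightarrow> 'a \<Rightarrow> 'a \<Rightarrow> 'a" where
  "hinv m H f e x = (THE y. y \<in> H \<and> e \<in> f (x # y # replicate (m - 2) e))"

definition canonical_hypergroup :: "nat \<Rightarrow> 'a set \<Rightarrow> ('a list \<Rightarrow> 'a set) \<Rightarrow> 'a \<Rightarrow> bool" where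
  "canonical_hypergroup m H f e \<longleftrightarrow>
     2 \<le> m \<and> e \<in> H
   \<and> (\<forall>xs. length xs = m \<and> set xs \<subseteq> H \<longrightarrow> f xs \<noteq> {} \<and> f xs \<subseteq> H)
   \<and> (\<forall>xs i. length xs = 2 * m - 1 \<and> set xs \<subseteq> H \<and> i < m \<longrightarrow>
        lift f (sing (take i xs) @ [f (take m (drop i xs))] @ sing (drop (i + m) xs))
        = lift f (sing (take (m - 1) xs) @ [f (drop (m - 1) xs)]))
   \<and> (\<forall>xs i. length xs = m \<and> set xs \<subseteq> H \<and> i < m \<longrightarrow> lift f ((sing xs)[i := H]) = H)
   \<and> (\<forall>xs ys. length xs = m \<and> set xs \<subseteq> H \<and> mset ys = mset xs \<longrightarrow> f ys = f xs)
   \<and> (\<forall>x\<in>H. f (x # replicate (m - 1) e) = {x})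
   \<and> (\<forall>e'\<in>H. (\<forall>x\<in>H. f (x # replicate (m - 1) e') = {x}) \<longrightarrow> e' = e)
   \<and> (\<forall>x\<in>H. \<exists>!y. y \<in> H \<and> e \<in> f (x # y # replicate (m - 2) e))
   \<and> (\<forall>xs x i. length xs = m \<and> set xs \<subseteq> H \<and> x \<in> H \<and> x \<in> f xs \<and> i < m \<longrightarrow>
        xs ! i \<in> f (map (hinv m H f e) (rev (take i xs)) @ [x]
                      @ map (hinv m H f e) (rev (drop (Suc i) xs))))"

definition krasner_hyperring ::
  "nat \<Rightarrow> nat \<Rightarrow> 'r set \<Rightarrow> ('r list \<Rightarrow> 'r set) \<Rightarrow> ('r list \<Rightarrow> 'r) \<Rightarrow> 'r \<Rightarrow> 'r \<Rightarrow> bool" where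
  "krasner_hyperring m n R f' g' z one \<longleftrightarrow>
     canonical_hypergroup m R f' z \<and> 2 \<le> n \<and> one \<in> R
   \<and> (\<forall>xs. length xs = n \<and> set xs \<subseteq> R \<longrightarrow> g' xs \<in> R)
   \<and> (\<forall>xs i. length xs = 2 * n - 1 \<and> set xs \<subseteq> R \<and> i < n \<longrightarrow>
        g' (take i xs @ [g' (take n (drop i xs))] @ drop (i + n) xs)
        = g' (take (n - 1) xs @ [g' (drop (n - 1) xs)]))
   \<and> (\<forall>xs ys. length xs = n \<and> set xs \<subseteq> R \<and> mset ys = mset xs \<longrightarrow> g' ys = g' xs)
   \<and> (\<forall>xs ys i. length xs = n \<and> set xs \<subseteq> R \<and> length ys = m \<and> set ys \<subseteq> R \<and> i < n \<longrightarrow>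
        (\<lambda>y. g' (xs[i := y])) ` f' ys = f' (map (\<lambda>y. g' (xs[i := y])) ys))
   \<and> (\<forall>xs i. length xs = n \<and> set xs \<subseteq> R \<and> i < n \<longrightarrow> g' (xs[i := z]) = z)
   \<and> (\<forall>x\<in>R. g' (x # replicate (n - 1) one) = x)"

definition hypermodule ::
  "nat \<Rightarrow> nat \<Rightarrow> 'r set \<Rightarrow> ('r list \<Rightarrow> 'r set) \<Rightarrow> ('r list \<Rightarrow> 'r) \<Rightarrow> 'r \<Rightarrow> 'r
   \<Rightarrow> 'a set \<Rightarrow> ('a list \<Rightarrow> 'a set) \<Rightarrow> ('r list \<Rightarrow> 'a \<Rightarrow> 'a set) \<Rightarrow> 'a \<Rightarrow> bool" where
  "hypermodule m n R f' g' z' one M f g z \<longleftrightarrow>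
     krasner_hyperring m n R f' g' z' one
   \<and> canonical_hypergroup m M f z
   \<and> (\<forall>rs x. length rs = n - 1 \<and> set rs \<subseteq> R \<and> x \<in> M \<longrightarrow> g rs x \<noteq> {} \<and> g rs x \<subseteq> M)
   \<and> (\<forall>rs xs. length rs = n - 1 \<and> set rs \<subseteq> R \<and> length xs = m \<and> set xs \<subseteq> M \<longrightarrow>
        \<Union>(g rs ` f xs) = lift f (map (g rs) xs))
   \<and> (\<forall>rs ss x i. length rs = n - 1 \<and> set rs \<subseteq> R \<and> length ss = m \<and> set ss \<subseteq> R
        \<and> x \<in> M \<and> i < n - 1 \<longrightarrow>
        \<Union>((\<lambda>s. g (rs[i := s]) x) ` f' ss) = lift f (map (\<lambda>s. g (rs[i := s]) x) ss))
   \<and> (\<forall>rs x i. length rs = 2 * n - 2 \<and> set rs \<subseteq> R \<and> x \<in> M \<and> i < n - 1 \<longrightarrow>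
        g (take i rs @ [g' (take n (drop i rs))] @ drop (i + n) rs) x
        = \<Union>(g (take (n - 1) rs) ` g (drop (n - 1) rs) x))
   \<and> (\<forall>rs x i. length rs = n - 1 \<and> set rs \<subseteq> R \<and> x \<in> M \<and> i < n - 1 \<longrightarrow>
        g (rs[i := z']) x = {z})
   \<and> (\<forall>a\<in>M. g (replicate (n - 1) one) a = {a})"

definition subhypergroup :: "nat \<Rightarrow> 'a set \<Rightarrow> ('a list \<Rightarrow> 'a set) \<Rightarrow> 'a set \<Rightarrow> bool" where
  "subhypergroup m H f N \<longleftrightarrow>
     N \<noteq> {} \<and> N \<subseteq> H
   \<and> (\<forall>xs. length xs = m \<and> set xs \<subseteq> N \<longrightarrow> f xs \<subseteq> N)
   \<and> (\<forall>xs i. length xs = m \<and> set xs \<subseteq> N \<and> i < m \<longrightarrow> lift f ((sing xs)[i := N]) = N)"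

definition subhypermodule ::
  "nat \<Rightarrow> nat \<Rightarrow> 'r set \<Rightarrow> 'a set \<Rightarrow> ('a list \<Rightarrow> 'a set) \<Rightarrow> ('r list \<Rightarrow> 'a \<Rightarrow> 'a set) \<Rightarrow> 'a set \<Rightarrow> bool" where
  "subhypermodule m n R M f g N \<longleftrightarrow>
     subhypergroup m M f N
   \<and> (\<forall>rs x. length rs = n - 1 \<and> set rs \<subseteq> R \<and> x \<in> N \<longrightarrow> g rs x \<subseteq> N)"

definition classical_prime ::
  "nat \<Rightarrow> nat \<Rightarrow> 'r set \<Rightarrow> 'r \<Rightarrow> 'a set \<Rightarrow> ('a list \<Rightarrow> 'a set) \<Rightarrow> ('r list \<Rightarrow> 'a \<Rightarrow> 'a set)
   \<Rightarrow> ('a set \<Rightarrow> 'a set) \<Rightarrow> 'a set \<Rightarrow> bool" where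
  "classical_prime m n R one M f g phi Q \<longleftrightarrow>
     subhypermodule m n R M f g Q \<and> Q \<noteq> M
   \<and> (\<forall>rs a. length rs = n - 1 \<and> set rs \<subseteq> R \<and> a \<in> M \<and> g rs a \<subseteq> Q - phi Q \<longrightarrow>
        (\<exists>i < n - 1. g (rs ! i # replicate (n - 2) one) a \<subseteq> Q))"

definition coset :: "nat \<Rightarrow> ('a list \<Rightarrow> 'a set) \<Rightarrow> 'a \<Rightarrow> 'a set \<Rightarrow> 'a \<Rightarrow> 'a set" where
  "coset m f z N a = lift f ([{a}, N] @ replicate (m - 2) {z})"

definition quot :: "nat \<Rightarrow> ('a list \<Rightarrow> 'a set) \<Rightarrow> 'a \<Rightarrow> 'a set \<Rightarrow> 'a set \<Rightarrow> 'a set set" where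
  "quot m f z N K = coset m f z N ` K"

definition quotF :: "nat \<Rightarrow> ('a list \<Rightarrow> 'a set) \<Rightarrow> 'a \<Rightarrow> 'a set \<Rightarrow> 'a set
    \<Rightarrow> 'a set list \<Rightarrow> 'a set set" where
  "quotF m f z N M Xs = {coset m f z N t | t as.
      list_all2 (\<lambda>a X. a \<in> M \<and> X = coset m f z N a) as Xs \<and> t \<in> f as}"

definition quotG :: "nat \<Rightarrow> ('a list \<Rightarrow> 'a set) \<Rightarrow> 'a \<Rightarrow> 'a set \<Rightarrow> 'a set
    \<Rightarrow> ('r list \<Rightarrow> 'a \<Rightarrow> 'a set) \<Rightarrow> 'r list \<Rightarrow> 'a set \<Rightarrow> 'a set set" where
  "quotG m f z N M g rs X = {coset m f z N w | w a.
      a \<in> M \<and> X = coset m f z N a \<and> w \<in> g rs a}"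

text \<open>phi_N(K/N) = f(phi(K),N,0^(m-2))/N, and the empty set if phi(K) is empty.
  For a subhypermodule K containing N, K is recovered from K/N as the union of its cosets.\<close>
definition phiN :: "nat \<Rightarrow> ('a list \<Rightarrow> 'a set) \<Rightarrow> 'a \<Rightarrow> 'a set \<Rightarrow> ('a set \<Rightarrow> 'a set)
    \<Rightarrow> 'a set set \<Rightarrow> 'a set set" where
  "phiN m f z N phi X =
     (if phi (\<Union>X) = {} then {}
      else quot m f z N (lift f ([phi (\<Union>X), N] @ replicate (m - 2) {z})))"

end

theory Submission
  imports Defs
begin

lemma lift_mem: "x \<in> lift f Xs \<longleftrightarrow> (\<exists>ys. list_all2 (\<lambda>y X. y \<in> X) ys Xs \<and> x \<in> f ys)"
  unfolding lift_def by blast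

lemma la2_sub:
  assumes "list_all2 (\<lambda>y X. y \<in> X) ys Xs" "\<forall>X\<in>set Xs. X \<subseteq> K"
  shows "set ys \<subseteq> K \<and> length ys = length Xs"
  using assms by (induction rule: list_all2_induct) auto

lemma la2_rep: "list_all2 (\<lambda>y X. y \<in> X) (replicate k z) (replicate k {z})"
  by (induction k) auto

lemma la2_gen:
  assumes "list_all2 P as Xs" "\<forall>a X. P a X \<and> X \<in> set Xs \<longrightarrow> a \<in> K"
  shows "set as \<subseteq> K \<and> length as = length Xs"
  using assms by (induction rule: list_all2_induct) auto

lemma sub_facts:
  assumes hm: "hypermodule m n R f' g' z' one M f g z"
    and sk: "subhypermodule m n R M f g K"
  shows "z \<in> K" "K \<subseteq> M" "K \<noteq> {}"
    "\<forall>xs. length xs = m \<and> set xs \<subseteq> K \<longrightarrow> f xs \<subseteq> K"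
    "\<forall>rs x. length rs = n - 1 \<and> set rs \<subseteq> R \<and> x \<in> K \<longrightarrow> g rs x \<subseteq> K"
proof -
  show KM: "K \<subseteq> M" and Kne: "K \<noteq> {}"
    and "\<forall>xs. length xs = m \<and> set xs \<subseteq> K \<longrightarrow> f xs \<subseteq> K"
    using sk unfolding subhypermodule_def subhypergroup_def by auto
  show gK: "\<forall>rs x. length rs = n - 1 \<and> set rs \<subseteq> R \<and> x \<in> K \<longrightarrow> g rs x \<subseteq> K"
    using sk unfolding subhypermodule_def by auto
  have kr: "krasner_hyperring m n R f' g' z' one" using hm unfolding hypermodule_def by auto
  have n2: "2 \<le> n" and zR: "z' \<in> R" using kr unfolding krasner_hyperring_def canonical_hypergroup_def by auto
  have gz: "\<forall>rs x i. length rs = n - 1 \<and> set rs \<subseteq> R \<and> x \<in> M \<and> i < n - 1 \<longrightarrow> g (rs[i := z']) x = {z}"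
    using hm unfolding hypermodule_def by auto
  obtain x where xK: "x \<in> K" using Kne by auto
  let ?rs = "replicate (n-1) z'"
  have "g (?rs[0 := z']) x = {z}" using gz xK KM zR n2 by auto
  moreover have "?rs[0 := z'] = ?rs" using n2 by (cases "n - 1") auto
  moreover have "set ?rs \<subseteq> R" using zR by auto
  moreover have "g ?rs x \<subseteq> K" using gK[rule_format, of ?rs x] xK \<open>set ?rs \<subseteq> R\<close> by simp
  ultimately show "z \<in> K" by auto
qed

lemma coset_sub:
  assumes "\<forall>xs. length xs = m \<and> set xs \<subseteq> K \<longrightarrow> f xs \<subseteq> K"
    and "q \<in> K" "N \<subseteq> K" "z \<in> K" "2 \<le> m"
  shows "coset m f z N q \<subseteq> K"
proof
  fix x assume "x \<in> coset m f z N q"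
  then obtain ys where ys: "list_all2 (\<lambda>y X. y \<in> X) ys ([{q}, N] @ replicate (m - 2) {z})"
    and x: "x \<in> f ys" unfolding coset_def lift_mem by blast
  have "set ys \<subseteq> K \<and> length ys = m" using la2_sub[OF ys, of K] assms by auto
  then show "x \<in> K" using assms(1) x by blast
qed

lemma coset_self:
  assumes "\<forall>x\<in>M. f (x # replicate (m - 1) z) = {x}" "a \<in> M" "z \<in> N" "2 \<le> m"
  shows "a \<in> coset m f z N a"
proof -
  have m1: "m - 1 = Suc (m - 2)" using assms(4) by arith
  have eq: "a # z # replicate (m-2) z = a # replicate (m - 1) z"
    unfolding m1 by simp
  have la: "list_all2 (\<lambda>y X. y \<in> X) (a # z # replicate (m-2) z) ([{a}, N] @ replicate (m - 2) {z})"
    using assms(3) by (simp add: la2_rep)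
  have "f (a # z # replicate (m-2) z) = {a}" unfolding eq using assms(1,2) by blast
  then show ?thesis unfolding coset_def lift_mem using la by blast
qed

theorem mainTheorem10:
  fixes R :: "'r set" and f' :: "'r list \<Rightarrow> 'r set" and g' :: "'r list \<Rightarrow> 'r"
    and z' one :: 'r
    and M :: "'a set" and f :: "'a list \<Rightarrow> 'a set" and g :: "'r list \<Rightarrow> 'a \<Rightarrow> 'a set"
    and z :: 'a and m n :: nat
    and N Q :: "'a set" and phi :: "'a set \<Rightarrow> 'a set"
  assumes "hypermodule m n R f' g' z' one M f g z"
    and "subhypermodule m n R M f g N" and "N \<noteq> M"
    and "subhypermodule m n R M f g Q" and "Q \<noteq> M"
    and "N \<subseteq> Q"
    and "\<forall>K. subhypermodule m n R M f g K \<longrightarrow>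
            phi K = {} \<or> subhypermodule m n R M f g (phi K)"
    and "classical_prime m n R one M f g phi Q"
  shows "classical_prime m n R one (quot m f z N M) (quotF m f z N M) (quotG m f z N M g)
           (phiN m f z N phi) (quot m f z N Q)"
proof -
  note hm = assms(1)
  have kr: "krasner_hyperring m n R f' g' z' one" using hm unfolding hypermodule_def by auto
  have cM: "canonical_hypergroup m M f z" using hm unfolding hypermodule_def by auto
  have n2: "2 \<le> n" and oneR: "one \<in> R" using kr unfolding krasner_hyperring_def by auto
  have m2: "2 \<le> m" using cM unfolding canonical_hypergroup_def by auto
  have fid: "\<forall>x\<in>M. f (x # replicate (m - 1) z) = {x}" using cM unfolding canonical_hypergroup_def by auto
  have gcl: "\<forall>rs x. length rs = n - 1 \<and> set rs \<subseteq> R \<and> x \<in> M \<longrightarrow> g rs x \<noteq> {} \<and> g rs x \<subseteq> M"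
    using hm unfolding hypermodule_def by auto
  have gdist: "\<forall>rs xs. length rs = n - 1 \<and> set rs \<subseteq> R \<and> length xs = m \<and> set xs \<subseteq> M \<longrightarrow>
        \<Union>(g rs ` f xs) = lift f (map (g rs) xs)"
    using hm unfolding hypermodule_def by auto
  have zN: "z \<in> N" and NM: "N \<subseteq> M" using sub_facts[OF hm assms(2)] by auto
  have zQ: "z \<in> Q" and QM: "Q \<subseteq> M" and Qne: "Q \<noteq> {}"
    and fQ: "\<forall>xs. length xs = m \<and> set xs \<subseteq> Q \<longrightarrow> f xs \<subseteq> Q"
    and gQ: "\<forall>rs x. length rs = n - 1 \<and> set rs \<subseteq> R \<and> x \<in> Q \<longrightarrow> g rs x \<subseteq> Q"
    using sub_facts[OF hm assms(4)] by auto
  have cQ: "coset m f z N q \<subseteq> Q" if "q \<in> Q" for q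
    using coset_sub[OF fQ that assms(6) zQ m2] .
  have cself: "a \<in> coset m f z N a" if "a \<in> M" for a
    using coset_self[OF fid that zN m2] .
  have inQ: "a \<in> Q" if h: "a \<in> M" "coset m f z N a \<in> quot m f z N Q" for a
  proof -
    obtain q where "q \<in> Q" "coset m f z N a = coset m f z N q" using h(2) unfolding quot_def by auto
    then show ?thesis using cQ cself[OF h(1)] by auto
  qed
  have UQ: "\<Union>(quot m f z N Q) = Q"
  proof
    show "\<Union>(quot m f z N Q) \<subseteq> Q" using cQ unfolding quot_def by auto
    show "Q \<subseteq> \<Union>(quot m f z N Q)" using cself QM unfolding quot_def by blast
  qed
  have key: "g rs a' \<subseteq> Q" if rs: "length rs = n - 1" "set rs \<subseteq> R" and aM: "a \<in> M"
    and a': "a' \<in> coset m f z N a" and ga: "g rs a \<subseteq> Q" for rs a a'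
  proof -
    obtain ys where ys: "list_all2 (\<lambda>y X. y \<in> X) ys ([{a}, N] @ replicate (m - 2) {z})"
      and a'f: "a' \<in> f ys" using a' unfolding coset_def lift_mem by blast
    have ysM: "set ys \<subseteq> M \<and> length ys = m" using la2_sub[OF ys, of M] aM NM zN m2 by auto
    have "g rs a' \<subseteq> lift f (map (g rs) ys)"
      using gdist[rule_format, of rs ys] rs ysM a'f by blast
    also have "\<dots> \<subseteq> Q"
    proof
      fix x assume "x \<in> lift f (map (g rs) ys)"
      then obtain ws where ws: "list_all2 (\<lambda>y X. y \<in> X) ws (map (g rs) ys)" and x: "x \<in> f ws"
        unfolding lift_mem by blast
      have "\<forall>X\<in>set (map (g rs) ys). X \<subseteq> Q"
      proof
        fix X assume "X \<in> set (map (g rs) ys)"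
        then obtain y where y: "y \<in> set ys" "X = g rs y" by auto
        have "y \<in> {a} \<or> y \<in> N \<or> y \<in> {z}"
          using la2_sub[OF ys, of "{a} \<union> N \<union> {z}"] y(1) by auto
        then show "X \<subseteq> Q" using y(2) ga gQ rs assms(6) zQ by blast
      qed
      then have "set ws \<subseteq> Q \<and> length ws = m" using la2_sub[OF ws] ysM by auto
      then show "x \<in> Q" using fQ x by blast
    qed
    finally show ?thesis .
  qed
  show ?thesis
  unfolding classical_prime_def
  proof (intro conjI allI impI)
    have QR: "\<forall>xs i. length xs = m \<and> set xs \<subseteq> Q \<and> i < m \<longrightarrow> lift f ((sing xs)[i := Q]) = Q"
      using assms(4) unfolding subhypermodule_def subhypergroup_def by blast
    have clo: "quotF m f z N M Xs \<subseteq> quot m f z N Q" if Xs: "length Xs = m" "set Xs \<subseteq> quot m f z N Q" for Xs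
    proof
      fix Y assume "Y \<in> quotF m f z N M Xs"
      then obtain t as where as: "list_all2 (\<lambda>a X. a \<in> M \<and> X = coset m f z N a) as Xs"
        and t: "t \<in> f as" and Y: "Y = coset m f z N t" unfolding quotF_def by blast
      have "set as \<subseteq> Q \<and> length as = m" using la2_gen[OF as, of Q] inQ Xs by auto
      then have "t \<in> Q" using fQ t by blast
      then show "Y \<in> quot m f z N Q" using Y unfolding quot_def by blast
    qed
    show "subhypermodule m n R (quot m f z N M) (quotF m f z N M) (quotG m f z N M g) (quot m f z N Q)"
      unfolding subhypermodule_def subhypergroup_def
    proof (intro conjI allI impI)
      show "quot m f z N Q \<noteq> {}" using Qne unfolding quot_def by blast
      show "quot m f z N Q \<subseteq> quot m f z N M" using QM unfolding quot_def by blast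
      show "quotF m f z N M Xs \<subseteq> quot m f z N Q" if "length Xs = m \<and> set Xs \<subseteq> quot m f z N Q" for Xs
        using clo that by blast
      show "quotG m f z N M g rs X \<subseteq> quot m f z N Q"
        if h: "length rs = n - 1 \<and> set rs \<subseteq> R \<and> X \<in> quot m f z N Q" for rs X
      proof
        fix Y assume "Y \<in> quotG m f z N M g rs X"
        then obtain w a where aM: "a \<in> M" and Xa: "X = coset m f z N a" and w: "w \<in> g rs a"
          and Y: "Y = coset m f z N w" unfolding quotG_def by blast
        have "a \<in> Q" using inQ aM Xa h by blast
        then have "w \<in> Q" using gQ h w by blast
        then show "Y \<in> quot m f z N Q" using Y unfolding quot_def by blast
      qed
      fix Xs i assume h: "length Xs = m \<and> set Xs \<subseteq> quot m f z N Q \<and> i < m"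
      show "lift (quotF m f z N M) ((sing Xs)[i := quot m f z N Q]) = quot m f z N Q"
      proof
        show "lift (quotF m f z N M) ((sing Xs)[i := quot m f z N Q]) \<subseteq> quot m f z N Q"
        proof
          fix Y assume "Y \<in> lift (quotF m f z N M) ((sing Xs)[i := quot m f z N Q])"
          then obtain Ys where Ys: "list_all2 (\<lambda>y X. y \<in> X) Ys ((sing Xs)[i := quot m f z N Q])"
            and Y: "Y \<in> quotF m f z N M Ys" unfolding lift_mem by blast
          have "\<forall>X\<in>set ((sing Xs)[i := quot m f z N Q]). X \<subseteq> quot m f z N Q"
            using h set_update_subset_insert[of "sing Xs" i "quot m f z N Q"] unfolding sing_def by auto
          then have "length Ys = m \<and> set Ys \<subseteq> quot m f z N Q" using la2_sub[OF Ys] h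
            unfolding sing_def by auto
          then show "Y \<in> quot m f z N Q" using clo Y by blast
        qed
        show "quot m f z N Q \<subseteq> lift (quotF m f z N M) ((sing Xs)[i := quot m f z N Q])"
        proof
          fix Y assume "Y \<in> quot m f z N Q"
          then obtain q where qQ: "q \<in> Q" and Y: "Y = coset m f z N q" unfolding quot_def by blast
          define xs where "xs = map (\<lambda>X. SOME x. x \<in> Q \<and> X = coset m f z N x) Xs"
          have xsp: "xs ! j \<in> Q \<and> Xs ! j = coset m f z N (xs ! j)" if "j < m" for j
          proof -
            have "Xs ! j \<in> quot m f z N Q" using h that by auto
            then have "\<exists>x. x \<in> Q \<and> Xs ! j = coset m f z N x" unfolding quot_def by blast
            then have "(SOME x. x \<in> Q \<and> Xs ! j = coset m f z N x) \<in> Q \<and>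
                Xs ! j = coset m f z N (SOME x. x \<in> Q \<and> Xs ! j = coset m f z N x)" by (rule someI_ex)
            then show ?thesis unfolding xs_def using that h by simp
          qed
          have xsl: "length xs = m" using h unfolding xs_def by simp
          have "set xs \<subseteq> Q" using xsp xsl by (auto simp: in_set_conv_nth)
          then have "lift f ((sing xs)[i := Q]) = Q" using QR xsl h by blast
          then have "q \<in> lift f ((sing xs)[i := Q])" using qQ by simp
          then obtain ys where ys: "list_all2 (\<lambda>y X. y \<in> X) ys ((sing xs)[i := Q])" and qf: "q \<in> f ys"
            unfolding lift_mem by blast
          have ysl: "length ys = m" using ys xsl unfolding sing_def by (simp add: list_all2_lengthD)
          have ysj: "ys ! j \<in> ((sing xs)[i := Q]) ! j" if "j < m" for j
            using ys that ysl by (simp add: list_all2_conv_all_nth)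
          have ysQ: "ys ! j \<in> Q" if "j < m" for j
            using ysj[OF that] xsp[OF that] that xsl h unfolding sing_def
            by (cases "j = i") (auto simp: nth_list_update)
          have l1: "list_all2 (\<lambda>y X. y \<in> X) (map (coset m f z N) ys) ((sing Xs)[i := quot m f z N Q])"
            unfolding list_all2_conv_all_nth
          proof (intro conjI allI impI)
            show "length (map (coset m f z N) ys) = length ((sing Xs)[i := quot m f z N Q])"
              using ysl h unfolding sing_def by simp
            fix j assume "j < length (map (coset m f z N) ys)"
            then have j: "j < m" using ysl by simp
            show "map (coset m f z N) ys ! j \<in> (sing Xs)[i := quot m f z N Q] ! j"
            proof (cases "j = i")
              case True
              then show ?thesis using ysQ[OF j] j ysl h unfolding sing_def quot_def by auto
            next
              case False
              then have "ys ! j = xs ! j" using ysj[OF j] j xsl unfolding sing_def by auto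
              then show ?thesis using False xsp[OF j] j ysl h unfolding sing_def by auto
            qed
          qed
          have l2: "list_all2 (\<lambda>a X. a \<in> M \<and> X = coset m f z N a) ys (map (coset m f z N) ys)"
            using ysQ ysl QM by (auto simp: list_all2_conv_all_nth)
          have "Y \<in> quotF m f z N M (map (coset m f z N) ys)"
            unfolding quotF_def using l2 qf Y by blast
          then show "Y \<in> lift (quotF m f z N M) ((sing Xs)[i := quot m f z N Q])"
            unfolding lift_mem using l1 by blast
        qed
      qed
    qed
    show "quot m f z N Q \<noteq> quot m f z N M"
    proof
      assume eq: "quot m f z N Q = quot m f z N M"
      obtain b where "b \<in> M" "b \<notin> Q" using QM assms(5) by auto
      moreover have "coset m f z N b \<in> quot m f z N Q" using eq \<open>b \<in> M\<close> unfolding quot_def by auto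
      ultimately show False using inQ by auto
    qed
    fix rs X
    assume H: "length rs = n - 1 \<and> set rs \<subseteq> R \<and> X \<in> quot m f z N M \<and>
       quotG m f z N M g rs X \<subseteq> quot m f z N Q - phiN m f z N phi (quot m f z N Q)"
    then obtain a where aM: "a \<in> M" and Xa: "X = coset m f z N a" unfolding quot_def by auto
    have "g rs a \<subseteq> Q - phi Q"
    proof
      fix w assume w: "w \<in> g rs a"
      have wM: "w \<in> M" using gcl H aM w by blast
      have cw: "coset m f z N w \<in> quotG m f z N M g rs X"
        unfolding quotG_def using aM Xa w by blast
      have "w \<in> Q" using inQ[OF wM] cw H by blast
      moreover have "w \<notin> phi Q"
      proof
        assume wp: "w \<in> phi Q"
        have m1: "m - 1 = Suc (m - 2)" using m2 by arith
        have la: "list_all2 (\<lambda>y X. y \<in> X) (w # z # replicate (m-2) z) ([phi Q, N] @ replicate (m - 2) {z})"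
          using wp zN by (simp add: la2_rep)
        have "f (w # z # replicate (m-2) z) = {w}" using fid wM m1 by (metis replicate_Suc)
        then have "w \<in> lift f ([phi Q, N] @ replicate (m - 2) {z})" unfolding lift_mem using la by blast
        then have "coset m f z N w \<in> phiN m f z N phi (quot m f z N Q)"
          unfolding phiN_def UQ using wp by (auto simp: quot_def)
        then show False using cw H by blast
      qed
      ultimately show "w \<in> Q - phi Q" by blast
    qed
    then obtain i where i: "i < n - 1" and gi: "g (rs ! i # replicate (n - 2) one) a \<subseteq> Q"
      using assms(8) H aM unfolding classical_prime_def by blast
    let ?rs = "rs ! i # replicate (n - 2) one"
    have rsl: "length ?rs = n - 1" using n2 by simp
    have rsR: "set ?rs \<subseteq> R" using H i oneR by auto
    show "\<exists>i<n - 1. quotG m f z N M g (rs ! i # replicate (n - 2) one) X \<subseteq> quot m f z N Q"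
    proof (intro exI conjI)
      show "i < n - 1" by fact
      show "quotG m f z N M g ?rs X \<subseteq> quot m f z N Q"
      proof
        fix Y assume "Y \<in> quotG m f z N M g ?rs X"
        then obtain w a' where a'M: "a' \<in> M" and Xa': "X = coset m f z N a'" and w: "w \<in> g ?rs a'"
          and Y: "Y = coset m f z N w" unfolding quotG_def by blast
        have "a' \<in> coset m f z N a" using cself[OF a'M] Xa Xa' by simp
        then have "g ?rs a' \<subseteq> Q" using key[OF rsl rsR aM _ gi] by blast
        then show "Y \<in> quot m f z N Q" using w Y unfolding quot_def by blast
      qed
    qed
  qed
qed

end
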